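(* Let $n\ge2$ and let $f:\mathbb R^n\to\mathbb R^n$ be an injective map (not assumed continuous) such that $f(A^\circ)=f(A)^\circ$ for every $A\in\mathcal K_0^n$. Then $f$ is an orthogonal linear map.
   Context: $\mathcal K_0^n$: closed convex subsets of $\mathbb R^n$ containing $0$. Polar: $A^\circ=\{x:\sup_{a\in A}\langle a,x\rangle\le1\}$. $f(A)=\{f(a):a\in A\}$. *)

theory Defs
  imports "HOL-Analysis.Analysis"
begin

definition K0 :: "('a::euclidean_space) set set" where
  "K0 = {A. closed A \<and> convex A \<and> 0 \<in> A}"

definition polar :: "('a::euclidean_space) set \<Rightarrow> 'a set" where
  "polar A = {x. \<forall>a\<in>A. inner a x \<le> 1}"

end

theory Submission
  imports Defs
begin



lemma polar_closed: "closed (polar A)"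
proof -
  have "polar A = (\<Inter>a\<in>A. {x. inner a x \<le> 1})" by (auto simp: polar_def)
  thus ?thesis by (auto intro!: closed_INT closed_halfspace_le)
qed

lemma polar_convex: "convex (polar A)"
proof -
  have "polar A = (\<Inter>a\<in>A. {x. inner a x \<le> 1})" by (auto simp: polar_def)
  thus ?thesis by (auto intro!: convex_INT convex_halfspace_le)
qed

lemma polar_0: "0 \<in> polar A" by (simp add: polar_def)

lemma polar_K0: "polar A \<in> K0"
  using polar_closed polar_convex polar_0 by (auto simp: K0_def)

lemma bipolar:
  fixes A :: "'a::euclidean_space set"
  assumes "A \<in> K0" shows "polar (polar A) = A"
proof
  show "A \<subseteq> polar (polar A)" by (auto simp: polar_def inner_commute)
next
  show "polar (polar A) \<subseteq> A"
  proof
    fix z assume z: "z \<in> polar (polar A)"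
    show "z \<in> A"
    proof (rule ccontr)
      assume "z \<notin> A"
      then obtain a b where ab: "inner a z < b" "\<forall>x\<in>A. inner a x > b"
        using separating_hyperplane_closed_point[of A z] assms by (auto simp: K0_def)
      have "0 \<in> A" using assms by (auto simp: K0_def)
      with ab have b: "b < 0" by auto
      have c: "(1/b) *\<^sub>R a \<in> polar A"
      proof -
        { fix x assume "x \<in> A"
          hence "inner a x > b" using ab by auto
          hence "inner a x / b \<le> 1" using b by (simp add: divide_le_eq_1)
          hence "inner x ((1/b) *\<^sub>R a) \<le> 1" by (simp add: inner_commute) }
        thus ?thesis by (auto simp: polar_def)
      qed
      have "inner ((1/b) *\<^sub>R a) z \<le> 1" using z c unfolding polar_def[of "polar A"] by blast
      moreover have "inner a z / b > 1" using ab b by (simp add: less_divide_eq_1)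
      ultimately show False by simp
    qed
  qed
qed

lemma seg0: "x \<in> closed_segment 0 y \<longleftrightarrow> (\<exists>u. 0 \<le> u \<and> u \<le> 1 \<and> x = u *\<^sub>R y)"
  by (simp add: in_segment)

lemma seg_K0: "closed_segment 0 y \<in> K0"
  by (simp add: K0_def)

lemma seg2_K0: "closed_segment (-y) y \<in> K0"
proof -
  have "0 \<in> closed_segment (-y) y"
    using midpoint_in_closed_segment[of "-y" y] by (simp add: midpoint_def)
  thus ?thesis by (simp add: K0_def)
qed

lemma polar_seg: "polar (closed_segment 0 y) = {x. inner y x \<le> 1}"
proof safe
  fix x assume "x \<in> polar (closed_segment 0 y)"
  thus "inner y x \<le> 1" by (auto simp: polar_def)
next
  fix x assume h: "inner y x \<le> 1"
  { fix a assume "a \<in> closed_segment 0 y"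
    then obtain u where u: "0 \<le> u" "u \<le> 1" "a = u *\<^sub>R y" by (auto simp: seg0)
    have "u * inner y x \<le> 1"
    proof (cases "inner y x \<ge> 0")
      case True then show ?thesis using u h by (metis mult_le_one)
    next
      case False then show ?thesis using u by (smt (verit) mult_nonneg_nonpos)
    qed
    hence "inner a x \<le> 1" using u by simp }
  thus "x \<in> polar (closed_segment 0 y)" by (auto simp: polar_def)
qed




lemma conn_seg:
  fixes C1 C2 :: "'a::euclidean_space set"
  assumes "closed C1" "closed C2" "convex (C1 \<union> C2)" "C1 \<inter> C2 \<subseteq> {0}" "p \<in> C1" "q \<in> C2"
  shows "0 \<in> closed_segment p q"
proof -
  have sub: "closed_segment p q \<subseteq> C1 \<union> C2"
    using assms by (intro closed_segment_subset) auto
  have "C1 \<inter> C2 \<inter> closed_segment p q \<noteq> {}"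
  proof
    assume "C1 \<inter> C2 \<inter> closed_segment p q = {}"
    from connected_closedD[OF connected_segment(1)[of p q] this sub assms(1,2)]
    show False using assms(5,6) by auto
  qed
  thus ?thesis using assms(4) by auto
qed

lemma opp_seg:
  fixes p q :: "'a::euclidean_space"
  assumes "0 \<in> closed_segment p q" "p \<noteq> 0" "q \<noteq> 0"
  shows "\<exists>l>0. p = - l *\<^sub>R q"
proof -
  obtain u where u: "0 \<le> u" "u \<le> 1" "0 = (1 - u) *\<^sub>R p + u *\<^sub>R q"
    using assms(1) by (auto simp: in_segment)
  have "u \<noteq> 1" using u assms by auto
  have "u \<noteq> 0" using u assms by auto
  have "(1-u) *\<^sub>R p = - u *\<^sub>R q" using u(3) by (simp add: eq_neg_iff_add_eq_0)
  hence "p = - (u/(1-u)) *\<^sub>R q" using \<open>u \<noteq> 1\<close>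
    by (metis (no_types, lifting) divide_inverse_commute eq_iff_diff_eq_0 inverse_eq_divide
       real_vector.scale_left_commute real_vector.scale_minus_left real_vector.scale_one
       right_inverse scaleR_scaleR)
  moreover have "u/(1-u) > 0" using u \<open>u \<noteq> 0\<close> \<open>u \<noteq> 1\<close> by auto
  ultimately show ?thesis by blast
qed

locale pm =
  fixes f :: "real^'n \<Rightarrow> real^'n"
  assumes inj: "inj f" and hyp: "\<forall>A\<in>K0. f ` polar A = polar (f ` A)"
begin

lemma hyp': "A \<in> K0 \<Longrightarrow> f ` polar A = polar (f ` A)" using hyp by blast

lemma f0: "f 0 = 0"
proof -
  have "UNIV \<in> K0" by (simp add: K0_def)
  hence "f ` polar UNIV = polar (range f)" by (rule hyp')
  hence "0 \<in> f ` polar UNIV" using polar_0 by auto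
  then obtain x where x: "x \<in> polar UNIV" "f x = 0" by auto
  have "x = 0"
  proof (rule ccontr)
    assume "x \<noteq> 0"
    have "inner ((2 / inner x x) *\<^sub>R x) x \<le> 1" using x(1) unfolding polar_def by blast
    thus False using \<open>x \<noteq> 0\<close> by simp
  qed
  thus ?thesis using x by simp
qed

lemma surj: "surj f"
proof -
  have "{0} \<in> K0" by (simp add: K0_def)
  hence "f ` polar {0} = polar (f ` {0})" by (rule hyp')
  moreover have "polar {0} = UNIV" by (simp add: polar_def)
  ultimately have "f ` UNIV = UNIV" using f0 by (metis image_empty image_insert)
  thus ?thesis by simp
qed

lemma img_K0: "A \<in> K0 \<Longrightarrow> f ` A \<in> K0"
proof -
  assume A: "A \<in> K0"
  have "f ` A = f ` polar (polar A)" using bipolar[OF A] by simp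
  also have "\<dots> = polar (f ` polar A)" using hyp' polar_K0 by blast
  finally show ?thesis using polar_K0 by simp
qed

lemma finj: "f x = f y \<longleftrightarrow> x = y" using inj by (auto simp: inj_def)

lemma seg_opp:
  assumes "y \<noteq> 0" "p \<in> f ` closed_segment 0 y" "p \<noteq> 0"
  shows "\<exists>l>0. p = - l *\<^sub>R f (-y)"
proof -
  let ?C1 = "f ` closed_segment 0 y" and ?C2 = "f ` closed_segment 0 (-y)"
  have K1: "?C1 \<in> K0" and K2: "?C2 \<in> K0" using img_K0 seg_K0 by blast+
  have un: "closed_segment 0 y \<union> closed_segment 0 (-y) = closed_segment (-y) y"
  proof -
    have "0 \<in> closed_segment (-y) y"
      using midpoint_in_closed_segment[of "-y" y] by (simp add: midpoint_def)
    from Un_closed_segment[OF this] show ?thesis by (simp add: closed_segment_commute Un_commute)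
  qed
  have cv: "convex (?C1 \<union> ?C2)" using img_K0[OF seg2_K0[of y]] un[symmetric] by (simp add: K0_def image_Un)
  have "closed_segment 0 y \<inter> closed_segment 0 (-y) \<subseteq> {0}"
  proof
    fix z assume "z \<in> closed_segment 0 y \<inter> closed_segment 0 (-y)"
    then obtain a b where ab: "0 \<le> a" "0 \<le> b" "z = a *\<^sub>R y" "z = b *\<^sub>R (-y)" by (auto simp: seg0)
    have "a *\<^sub>R y = - (b *\<^sub>R y)" using ab by simp
    hence "(a + b) *\<^sub>R y = 0" by (simp add: scaleR_add_left)
    hence "a + b = 0" using assms by simp
    thus "z \<in> {0}" using ab by simp
  qed
  hence int: "?C1 \<inter> ?C2 \<subseteq> {0}" using f0 by (auto simp: image_Int[OF inj, symmetric])
  have q: "f (-y) \<in> ?C2" by auto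
  have nz: "f (-y) \<noteq> 0" using assms finj f0 by (metis neg_equal_0_iff_equal)
  have cl: "closed ?C1" "closed ?C2" using K1 K2 by (auto simp: K0_def)
  have c1: "0 \<in> closed_segment p (f (-y))"
    using conn_seg[OF cl cv int assms(2) q] .
  show ?thesis using opp_seg[OF c1 assms(3) nz] .
qed

lemma seg_ray:
  assumes "y \<noteq> 0" "p \<in> f ` closed_segment 0 y"
  shows "\<exists>c\<ge>0. p = c *\<^sub>R f y"
proof (cases "p = 0")
  case True thus ?thesis by (intro exI[of _ 0]) auto
next
  case False
  have nz: "f y \<noteq> 0" using assms finj f0 by metis
  obtain l where l: "l > 0" "p = - l *\<^sub>R f (-y)" using seg_opp[OF assms False] by blast
  obtain m where m: "m > 0" "f y = - m *\<^sub>R f (-y)" using seg_opp[OF assms(1) _ nz] by auto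
  have "p = (l/m) *\<^sub>R f y" using l m by simp
  thus ?thesis using l m by (intro exI[of _ "l/m"]) auto
qed

lemma neg_ray:
  assumes "y \<noteq> 0" shows "\<exists>m>0. f (-y) = - m *\<^sub>R f y"
proof -
  have nz: "f y \<noteq> 0" using assms finj f0 by metis
  obtain m where m: "m > 0" "f y = - m *\<^sub>R f (-y)" using seg_opp[OF assms(1) _ nz] by auto
  hence "f (-y) = - (1/m) *\<^sub>R f y" by simp
  thus ?thesis using m by (intro exI[of _ "1/m"]) auto
qed

lemma seg_img: "f ` closed_segment 0 y = closed_segment 0 (f y)"
proof (cases "y = 0")
  case True thus ?thesis using f0 by simp
next
  case y: False
  have K: "f ` closed_segment 0 z \<in> K0" for z using img_K0 seg_K0 by blast
  show ?thesis
  proof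
    show "closed_segment 0 (f y) \<subseteq> f ` closed_segment 0 y"
      using K[of y] f0 by (intro closed_segment_subset) (auto simp: K0_def)
  next
    show "f ` closed_segment 0 y \<subseteq> closed_segment 0 (f y)"
    proof
      fix p assume p: "p \<in> f ` closed_segment 0 y"
      obtain c where c: "c \<ge> 0" "p = c *\<^sub>R f y" using seg_ray[OF y p] by blast
      obtain t where t: "0 \<le> t" "t \<le> 1" "p = f (t *\<^sub>R y)" using p by (auto simp: seg0)
      have "c \<le> 1"
      proof (rule ccontr)
        assume "\<not> c \<le> 1"
        hence c1: "c > 1" by simp
        have "f y = (1/c) *\<^sub>R p" using c c1 by simp
        hence "f y \<in> closed_segment 0 p" using c1 by (auto simp: seg0 intro!: exI[of _ "1/c"])
        moreover have "closed_segment 0 p \<subseteq> f ` closed_segment 0 (t *\<^sub>R y)"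
          using K[of "t *\<^sub>R y"] f0 t by (intro closed_segment_subset) (auto simp: K0_def)
        ultimately have "y \<in> closed_segment 0 (t *\<^sub>R y)" using inj_image_mem_iff[OF inj] by blast
        then obtain s where s: "0 \<le> s" "s \<le> 1" "y = s *\<^sub>R t *\<^sub>R y" by (auto simp: seg0)
        hence "(1 - s * t) *\<^sub>R y = 0" by (simp add: algebra_simps)
        hence "s * t = 1" using y by simp
        hence "t = 1" using s t mult_left_le_one_le[of t s] by linarith
        hence "p = f y" using t by simp
        thus False using c c1 f0 finj y by (metis scaleR_cancel_right scaleR_one less_irrefl)
      qed
      thus "p \<in> closed_segment 0 (f y)" using c by (auto simp: seg0)
    qed
  qed
qed

lemma E: "inner x y \<le> 1 \<longleftrightarrow> inner (f x) (f y) \<le> 1"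
proof -
  have h: "f ` polar (closed_segment 0 y) = polar (closed_segment 0 (f y))"
    using hyp'[OF seg_K0[of y]] seg_img by simp
  have "inner x y \<le> 1 \<longleftrightarrow> x \<in> polar (closed_segment 0 y)" by (simp add: polar_seg inner_commute)
  also have "\<dots> \<longleftrightarrow> f x \<in> f ` polar (closed_segment 0 y)" using inj_image_mem_iff[OF inj] by blast
  also have "\<dots> \<longleftrightarrow> inner (f x) (f y) \<le> 1" using h by (simp add: polar_seg inner_commute)
  finally show ?thesis .
qed

end



context pm begin

lemma fnz: "x \<noteq> 0 \<Longrightarrow> f x \<noteq> 0" using finj[of x 0] f0 by simp

lemma ray_ex:
  assumes p: "p \<noteq> 0" and t: "t > 0"
  shows "\<exists>c>0. f (t *\<^sub>R p) = c *\<^sub>R f p \<and> (t < 1 \<longrightarrow> c < 1)"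
proof (cases "t \<le> 1")
  case True
  have "t *\<^sub>R p \<in> closed_segment 0 p" using True t by (auto simp: seg0 intro!: exI[of _ t])
  hence "f (t *\<^sub>R p) \<in> f ` closed_segment 0 p" by (rule imageI)
  hence "f (t *\<^sub>R p) \<in> closed_segment 0 (f p)" by (simp only: seg_img)
  then obtain c where c: "0 \<le> c" "c \<le> 1" "f (t *\<^sub>R p) = c *\<^sub>R f p" by (auto simp: seg0)
  have "t *\<^sub>R p \<noteq> 0" using p t by simp
  hence "f (t *\<^sub>R p) \<noteq> 0" by (rule fnz)
  hence "c \<noteq> 0" using c by auto
  hence cp: "c > 0" using c by simp
  have ct: "t < 1 \<longrightarrow> c < 1"
  proof
    assume "t < 1"
    show "c < 1"
    proof (rule ccontr)
      assume "\<not> c < 1" hence "c = 1" using c by simp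
      hence "t *\<^sub>R p = p" using c finj by simp
      hence "(t - 1) *\<^sub>R p = 0" by (simp add: algebra_simps)
      thus False using \<open>t < 1\<close> p by simp
    qed
  qed
  show ?thesis using cp ct c(3) by blast
next
  case False
  have "p = (1/t) *\<^sub>R (t *\<^sub>R p)" using t by simp
  hence "p \<in> closed_segment 0 (t *\<^sub>R p)" using False t by (auto simp: seg0 intro!: exI[of _ "1/t"])
  hence "f p \<in> f ` closed_segment 0 (t *\<^sub>R p)" by (rule imageI)
  hence "f p \<in> closed_segment 0 (f (t *\<^sub>R p))" by (simp only: seg_img)
  then obtain s where s: "0 \<le> s" "s \<le> 1" "f p = s *\<^sub>R f (t *\<^sub>R p)" by (auto simp: seg0)
  have "f p \<noteq> 0" using p by (rule fnz)
  hence "s \<noteq> 0" using s by auto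
  hence "f (t *\<^sub>R p) = (1/s) *\<^sub>R f p" using s by simp
  moreover have "1/s > 0" using s \<open>s \<noteq> 0\<close> by simp
  ultimately show ?thesis using False by (intro exI[of _ "1/s"]) simp
qed

lemma ray_surj:
  assumes p: "p \<noteq> 0" and l: "l \<ge> 1"
  shows "\<exists>t\<ge>1. f (t *\<^sub>R p) = l *\<^sub>R f p"
proof -
  obtain z where z: "l *\<^sub>R f p = f z" using surj by (metis surjD)
  have "f p \<in> closed_segment 0 (l *\<^sub>R f p)" using l by (auto simp: seg0 intro!: exI[of _ "1/l"])
  hence "f p \<in> closed_segment 0 (f z)" using z by simp
  hence "f p \<in> f ` closed_segment 0 z" by (simp only: seg_img)
  hence "p \<in> closed_segment 0 z" using inj_image_mem_iff[OF inj] by blast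
  then obtain s where s: "0 \<le> s" "s \<le> 1" "p = s *\<^sub>R z" by (auto simp: seg0)
  have "s \<noteq> 0" using s p by auto
  hence "z = (1/s) *\<^sub>R p" using s by simp
  moreover have "1/s \<ge> 1" using s \<open>s \<noteq> 0\<close> by simp
  ultimately show ?thesis using z by (intro exI[of _ "1/s"]) simp
qed

lemma Eeq:
  assumes "inner x v = 1" shows "inner (f x) (f v) = 1"
proof (rule ccontr)
  assume ne: "inner (f x) (f v) \<noteq> 1"
  have le: "inner (f x) (f v) \<le> 1" using E assms by simp
  hence lt: "inner (f x) (f v) < 1" using ne by simp
  have x: "x \<noteq> 0" using assms by auto
  define a where "a = inner (f x) (f v)"
  have alt: "a < 1" using lt a_def by simp
  define l where "l = (if a \<le> 0 then 2 else 1 / a)"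
  have l1: "l \<ge> 1"
  proof (cases "a \<le> 0")
    case True thus ?thesis by (simp add: l_def)
  next
    case False thus ?thesis using alt by (simp add: l_def)
  qed
  have l2: "l * a \<le> 1"
  proof (cases "a \<le> 0")
    case True thus ?thesis by (simp add: l_def)
  next
    case False thus ?thesis by (simp add: l_def)
  qed
  obtain t where t: "t \<ge> 1" "f (t *\<^sub>R x) = l *\<^sub>R f x" using ray_surj[OF x l1] by blast
  have "inner (f (t *\<^sub>R x)) (f v) \<le> 1" using t l2 by (simp add: a_def)
  hence "inner (t *\<^sub>R x) v \<le> 1" using E by blast
  hence "t \<le> 1" using assms by simp
  hence "t = 1" using t by simp
  hence "l *\<^sub>R f x = 1 *\<^sub>R f x" using t by simp
  hence "l = 1" using fnz[OF x] by (simp only: scaleR_cancel_right) simp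
  show False
  proof (cases "a \<le> 0")
    case True thus ?thesis using \<open>l = 1\<close> by (simp add: l_def)
  next
    case False thus ?thesis using \<open>l = 1\<close> alt by (simp add: l_def)
  qed
qed

definition kap :: "real \<Rightarrow> real^'n \<Rightarrow> real" where
  "kap t p = inner (f (t *\<^sub>R p)) (f p) / inner (f p) (f p)"

lemma kap:
  assumes "p \<noteq> 0" "t > 0"
  shows "f (t *\<^sub>R p) = kap t p *\<^sub>R f p" "kap t p > 0" "t < 1 \<Longrightarrow> kap t p < 1"
proof -
  obtain c where c: "c > 0" "f (t *\<^sub>R p) = c *\<^sub>R f p" "t < 1 \<longrightarrow> c < 1"
    using ray_ex[OF assms] by blast
  have "inner (f p) (f p) \<noteq> 0" using fnz assms by simp
  hence "kap t p = c" using c by (simp add: kap_def)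
  thus "f (t *\<^sub>R p) = kap t p *\<^sub>R f p" "kap t p > 0" "t < 1 \<Longrightarrow> kap t p < 1" using c by auto
qed

lemma kap_dual:
  assumes "inner p q = 1" "t > 0"
  shows "kap t p * kap (1/t) q = 1"
proof -
  have p: "p \<noteq> 0" and q: "q \<noteq> 0" using assms by auto
  have "inner (t *\<^sub>R p) ((1/t) *\<^sub>R q) = 1" using assms by simp
  hence "inner (f (t *\<^sub>R p)) (f ((1/t) *\<^sub>R q)) = 1" by (rule Eeq)
  hence "kap t p * kap (1/t) q * inner (f p) (f q) = 1" using kap(1)[OF p assms(2)] kap(1)[OF q, of "1/t"] assms
    by (simp add: mult_ac)
  moreover have "inner (f p) (f q) = 1" using Eeq assms by simp
  ultimately show ?thesis by simp
qed

end



lemma orth_ex: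
  fixes p :: "real^'n"
  assumes "CARD('n) \<ge> 2"
  shows "\<exists>w. w \<noteq> 0 \<and> inner p w = 0"
proof -
  obtain i j :: 'n where ij: "i \<noteq> j"
  proof -
    have "\<exists>i j :: 'n. i \<noteq> j"
    proof (rule ccontr)
      assume "\<not> (\<exists>i j :: 'n. i \<noteq> j)"
      hence u: "(UNIV :: 'n set) = {undefined}" by auto
      have "CARD('n) = card {undefined::'n}" by (subst u) (rule refl)
      hence "CARD('n) = 1" by simp
      thus False using assms by simp
    qed
    thus ?thesis using that by blast
  qed
  show ?thesis
  proof (cases "p $ i = 0")
    case True
    have "inner p (axis i 1) = 0" using True by (simp add: inner_axis)
    moreover have "axis i (1::real) \<noteq> 0" by (simp add: axis_eq_0_iff)
    ultimately show ?thesis by blast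
  next
    case False
    define w where "w = (p $ j) *\<^sub>R axis i (1::real) - (p $ i) *\<^sub>R axis j 1"
    have "w $ j = - p $ i" using ij by (simp add: w_def axis_def)
    hence "w \<noteq> 0" using False by auto
    moreover have "inner p w = 0" by (simp add: w_def inner_diff_right inner_axis)
    ultimately show ?thesis by blast
  qed
qed

lemma Q_ex:
  fixes p p' :: "'a::real_inner"
  assumes p: "p \<noteq> 0" and np: "\<forall>l. p' \<noteq> l *\<^sub>R p"
  shows "\<exists>q. inner p q = 1 \<and> inner p' q = 1"
proof -
  define w where "w = p' - (inner p' p / inner p p) *\<^sub>R p"
  have w0: "w \<noteq> 0" using np by (auto simp: w_def)
  have pw: "inner p w = 0" using p by (simp add: w_def inner_diff_right inner_commute)
  have p'w: "inner p' w = inner w w"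
  proof -
    have "inner w w = inner p' w - (inner p' p / inner p p) * inner p w"
      by (simp add: w_def inner_diff_left)
    thus ?thesis using pw by simp
  qed
  define q where "q = (1 / inner p p) *\<^sub>R p + ((1 - inner p' p / inner p p) / inner w w) *\<^sub>R w"
  have "inner p q = 1" using p pw by (simp add: q_def inner_add_right)
  moreover have "inner p' q = 1" using w0 p'w p
    by (simp add: q_def inner_add_right inner_commute)
  ultimately show ?thesis by blast
qed



locale pm2 = pm f for f :: "real^'n \<Rightarrow> real^'n" +
  assumes card: "CARD('n) \<ge> 2"
begin

lemma kap_common:
  assumes "inner p q = 1" "inner p' q = 1" "t > 0"
  shows "kap t p = kap t p'"
proof -
  have q: "q \<noteq> 0" using assms by auto
  have "kap t p * kap (1/t) q = kap t p' * kap (1/t) q"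
    using kap_dual[OF assms(1,3)] kap_dual[OF assms(2,3)] by simp
  moreover have "kap (1/t) q > 0" using kap(2)[OF q] assms by simp
  ultimately show ?thesis by simp
qed

lemma kap_indep:
  assumes p: "p \<noteq> 0" and p': "p' \<noteq> 0" and t: "t > 0"
  shows "kap t p = kap t p'"
proof (cases "\<forall>l. p' \<noteq> l *\<^sub>R p")
  case True
  then obtain q where "inner p q = 1" "inner p' q = 1" using Q_ex[OF p] by blast
  thus ?thesis using kap_common t by blast
next
  case False
  then obtain l where l: "p' = l *\<^sub>R p" by blast
  obtain w :: "real^'n" where w: "w \<noteq> 0" "inner p w = 0" using orth_ex[OF card] by blast
  have "\<forall>m. w \<noteq> m *\<^sub>R p"
  proof
    fix m show "w \<noteq> m *\<^sub>R p"
    proof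
      assume "w = m *\<^sub>R p"
      hence "m * inner p p = 0" using w by simp
      hence "m = 0" using p by simp
      thus False using \<open>w = m *\<^sub>R p\<close> w by simp
    qed
  qed
  then obtain q1 where q1: "inner p q1 = 1" "inner w q1 = 1" using Q_ex[OF p] by blast
  have "\<forall>m. p' \<noteq> m *\<^sub>R w"
  proof
    fix m show "p' \<noteq> m *\<^sub>R w"
    proof
      assume "p' = m *\<^sub>R w"
      hence "inner p p' = 0" using w by simp
      hence "l * inner p p = 0" using l by simp
      hence "l = 0" using p by simp
      thus False using l p' by simp
    qed
  qed
  then obtain q2 where q2: "inner w q2 = 1" "inner p' q2 = 1" using Q_ex[OF w(1)] by blast
  have "kap t p = kap t w" using kap_common[OF q1 t] .
  also have "\<dots> = kap t p'" using kap_common[OF q2 t] .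
  finally show ?thesis .
qed

definition e0 :: "real^'n" where "e0 = axis undefined 1"
lemma e0: "e0 \<noteq> 0" "inner e0 e0 = 1" by (auto simp: e0_def axis_eq_0_iff inner_axis_axis)

definition G :: "real \<Rightarrow> real" where "G t = kap t e0"

lemma G_ray: assumes "p \<noteq> 0" "t > 0" shows "f (t *\<^sub>R p) = G t *\<^sub>R f p"
proof -
  have "kap t p = kap t e0" using kap_indep[OF assms(1) e0(1) assms(2)] .
  thus ?thesis using kap(1)[OF assms] by (simp add: G_def)
qed

lemma G_pos: "t > 0 \<Longrightarrow> G t > 0" using kap(2)[OF e0(1)] unfolding G_def .
lemma G_lt1: "0 < t \<Longrightarrow> t < 1 \<Longrightarrow> G t < 1" using kap(3)[OF e0(1)] unfolding G_def .
lemma G_inv: "t > 0 \<Longrightarrow> G t * G (1/t) = 1" using kap_dual[OF e0(2)] unfolding G_def .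

lemma G_one: "G 1 = 1"
proof -
  have h: "G 1 * G 1 = 1" "G 1 > 0" using G_inv[of 1] G_pos[of 1] by simp_all
  hence "(G 1 - 1) * (G 1 + 1) = 0" by (simp add: algebra_simps)
  thus ?thesis using h(2) by simp
qed

lemma G_mult:
  assumes "a > 0" "b > 0" shows "G (a * b) = G a * G b"
proof -
  have be: "b *\<^sub>R e0 \<noteq> 0" using e0 assms by simp
  have "f ((a * b) *\<^sub>R e0) = G (a*b) *\<^sub>R f e0" using G_ray[OF e0(1), of "a*b"] assms by simp
  moreover have "f (a *\<^sub>R (b *\<^sub>R e0)) = G a *\<^sub>R f (b *\<^sub>R e0)" using G_ray[OF be, of a] assms by simp
  moreover have "f (b *\<^sub>R e0) = G b *\<^sub>R f e0" using G_ray[OF e0(1), of b] assms by simp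
  ultimately have "G (a*b) *\<^sub>R f e0 = (G a * G b) *\<^sub>R f e0" by simp
  thus ?thesis using fnz[OF e0(1)] by simp
qed

lemma G_mono: assumes "0 < s" "s < t" shows "G s < G t"
proof -
  have "G s = G (t * (s/t))" using assms by simp
  also have "\<dots> = G t * G (s/t)" using assms by (intro G_mult) auto
  also have "\<dots> < G t" using G_lt1[of "s/t"] G_pos[of t] assms by simp
  finally show ?thesis .
qed

lemma M1:
  assumes "inner x v = c" "c > 0" shows "inner (f x) (f v) = G c"
proof -
  have v: "v \<noteq> 0" using assms by auto
  have "inner x ((1/c) *\<^sub>R v) = 1" using assms by simp
  hence "inner (f x) (f ((1/c) *\<^sub>R v)) = 1" by (rule Eeq)
  hence "G (1/c) * inner (f x) (f v) = 1" using G_ray[OF v, of "1/c"] assms by simp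
  moreover have "G c * G (1/c) = 1" using G_inv assms by simp
  moreover have "G (1/c) > 0" using G_pos assms by simp
  ultimately have "G c * (G (1/c) * inner (f x) (f v)) = G c" by simp
  thus ?thesis using \<open>G c * G (1/c) = 1\<close> by (simp add: mult.assoc[symmetric])
qed

lemma M3:
  assumes "inner x v = 0" shows "inner (f x) (f v) = 0"
proof (cases "x = 0")
  case True thus ?thesis using f0 by simp
next
  case x: False
  have le: "inner (f x) (f v) \<le> 0" if "inner x v = 0" for v
  proof (rule ccontr)
    assume "\<not> ?thesis"
    hence a: "inner (f x) (f v) > 0" by simp
    define l where "l = max 1 (2 / inner (f x) (f v))"
    have "l \<ge> 1" by (simp add: l_def)
    then obtain t where t: "t \<ge> 1" "f (t *\<^sub>R x) = l *\<^sub>R f x" using ray_surj[OF x] by blast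
    have "inner (t *\<^sub>R x) v \<le> 1" using that by simp
    hence "inner (f (t *\<^sub>R x)) (f v) \<le> 1" using E by blast
    hence "l * inner (f x) (f v) \<le> 1" using t by simp
    moreover have "l * inner (f x) (f v) \<ge> 2"
      using a by (simp add: l_def field_simps max_def)
    ultimately show False by simp
  qed
  have h1: "inner (f x) (f v) \<le> 0" using le assms by simp
  show ?thesis
  proof (cases "v = 0")
    case True thus ?thesis using f0 by simp
  next
    case False
    obtain m where m: "m > 0" "f (-v) = - m *\<^sub>R f v" using neg_ray[OF False] by blast
    have "inner (f x) (f (-v)) \<le> 0" using le assms by simp
    hence "- m * inner (f x) (f v) \<le> 0" using m by simp
    hence "inner (f x) (f v) \<ge> 0" using m by (simp add: zero_le_mult_iff)
    thus ?thesis using h1 by simp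
  qed
qed

lemma M5:
  assumes s: "s > 0" shows "G (1 + s^2) \<ge> 1 + (G s)^2"
proof -
  obtain w0 :: "real^'n" where w0: "w0 \<noteq> 0" "inner e0 w0 = 0" using orth_ex[OF card] by blast
  define w where "w = (1 / norm w0) *\<^sub>R w0"
  have ww: "inner w w = 1" using w0 by (simp add: w_def inner_commute power2_norm_eq_inner[symmetric])
  have ew: "inner e0 w = 0" using w0 by (simp add: w_def)
  define p where "p = e0 + s *\<^sub>R w"
  have "inner p e0 = 1" using e0 ew by (simp add: p_def inner_add_left inner_commute[of w e0])
  hence a: "inner (f p) (f e0) = 1" using M1 G_one by simp
  have "inner p w = s" using ww ew by (simp add: p_def inner_add_left)
  hence b: "inner (f p) (f w) = G s" using M1 s by simp
  have "inner p p = 1 + s^2" using ww ew e0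
    by (simp add: p_def inner_add_left inner_add_right inner_commute power2_eq_square)
  hence c: "inner (f p) (f p) = G (1 + s^2)" using M1 s by (simp add: add_pos_nonneg)
  have d: "inner (f e0) (f e0) = 1" using M1 e0 G_one by simp
  have d': "inner (f w) (f w) = 1" using M1 ww G_one by simp
  have o: "inner (f e0) (f w) = 0" using M3 ew by simp
  define r where "r = f p - (f e0) - (G s) *\<^sub>R f w"
  have "0 \<le> inner r r" by simp
  also have "inner r r = G (1 + s^2) - 1 - (G s)^2"
    using a b c d d' o
    by (simp add: r_def inner_diff_left inner_diff_right inner_commute power2_eq_square algebra_simps)
  finally show ?thesis by simp
qed

end



context pm begin

lemma polar_all: "f ` polar X = polar (f ` X)"
proof
  show "f ` polar X \<subseteq> polar (f ` X)"
  proof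
    fix z assume "z \<in> f ` polar X"
    then obtain x where x: "x \<in> polar X" "z = f x" by auto
    { fix a assume "a \<in> X"
      hence "inner a x \<le> 1" using x by (auto simp: polar_def)
      hence "inner (f a) (f x) \<le> 1" using E by blast }
    thus "z \<in> polar (f ` X)" using x by (auto simp: polar_def)
  qed
next
  show "polar (f ` X) \<subseteq> f ` polar X"
  proof
    fix z assume z: "z \<in> polar (f ` X)"
    obtain x where x: "z = f x" using surj by (metis surjD)
    { fix a assume "a \<in> X"
      hence "inner (f a) (f x) \<le> 1" using z x by (auto simp: polar_def)
      hence "inner a x \<le> 1" using E by blast }
    hence "x \<in> polar X" by (auto simp: polar_def)
    thus "z \<in> f ` polar X" using x by auto
  qed
qed

lemma inv_pm: "pm (inv f)"
proof
  show "inj (inv f)" using surj by (rule surj_imp_inj_inv)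
  show "\<forall>A\<in>K0. inv f ` polar A = polar (inv f ` A)"
  proof
    fix A :: "(real^'n) set" assume "A \<in> K0"
    have ff: "f ` inv f ` Y = Y" for Y using surj by (auto simp: surj_f_inv_f image_iff)
    have ii: "inv f ` f ` Y = Y" for Y using inj by (simp add: image_comp)
    have "f ` polar (inv f ` A) = polar A" using polar_all[of "inv f ` A"] ff by simp
    hence "inv f ` f ` polar (inv f ` A) = inv f ` polar A" by simp
    thus "inv f ` polar A = polar (inv f ` A)" using ii by simp
  qed
qed

end

lemma final:
  fixes f :: "real ^ 'n \<Rightarrow> real ^ 'n"
  assumes card: "CARD('n) \<ge> 2" and inj: "inj f"
    and hyp: "\<forall>A\<in>K0. f ` (polar A) = polar (f ` A)"
  shows "orthogonal_transformation f"
proof -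
  interpret F: pm2 f using assms by unfold_locales auto
  have pg: "pm (inv f)" by (rule F.inv_pm)
  interpret H: pm2 "inv f" using pg card by (simp add: pm2_def pm2_axioms_def)
  have gf: "H.G (F.G d) = d" if d: "d > 0" for d
  proof -
    have "inner (d *\<^sub>R F.e0) F.e0 = d" using F.e0 by simp
    hence 1: "inner (f (d *\<^sub>R F.e0)) (f F.e0) = F.G d" using F.M1 d by blast
    have "F.G d > 0" using F.G_pos d by blast
    hence "inner (inv f (f (d *\<^sub>R F.e0))) (inv f (f F.e0)) = H.G (F.G d)" using H.M1 1 by blast
    thus ?thesis using inj F.e0 by (simp add: inv_f_f)
  qed
  have fg: "F.G (H.G y) = y" if y: "y > 0" for y
  proof -
    have "inner (y *\<^sub>R F.e0) F.e0 = y" using F.e0 by simp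
    hence 1: "inner (inv f (y *\<^sub>R F.e0)) (inv f F.e0) = H.G y" using H.M1 y by blast
    have "H.G y > 0" using H.G_pos y by blast
    hence "inner (f (inv f (y *\<^sub>R F.e0))) (f (inv f F.e0)) = F.G (H.G y)" using F.M1 1 by blast
    thus ?thesis using F.surj F.e0 by (simp add: surj_f_inv_f)
  qed
  have mono: "F.G s \<le> F.G t" if "0 < s" "s \<le> t" for s t
    using F.G_mono that by (cases "s = t") (auto simp: less_eq_real_def)
  have key: "F.G (1 + s^2) = 1 + (F.G s)^2" if s: "s > 0" for s
  proof -
    have Gs: "F.G s > 0" using F.G_pos s by blast
    have "H.G (1 + (F.G s)^2) \<ge> 1 + (H.G (F.G s))^2" using H.M5 Gs by blast
    hence "H.G (1 + (F.G s)^2) \<ge> 1 + s^2" using gf s by simp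
    hence "F.G (1 + s^2) \<le> F.G (H.G (1 + (F.G s)^2))" using mono s by (simp add: add_pos_nonneg)
    also have "\<dots> = 1 + (F.G s)^2" using fg by (simp add: add_pos_nonneg)
    finally show ?thesis using F.M5 s by (simp add: antisym)
  qed
  have add1: "F.G (1 + x) = 1 + F.G x" if x: "x > 0" for x
  proof -
    have "F.G (sqrt x * sqrt x) = F.G (sqrt x) * F.G (sqrt x)" using F.G_mult[of "sqrt x" "sqrt x"] x by simp
    hence "F.G x = (F.G (sqrt x))^2" using x by (simp add: power2_eq_square)
    moreover have "F.G (1 + (sqrt x)^2) = 1 + (F.G (sqrt x))^2" using key[of "sqrt x"] x by simp
    ultimately show ?thesis using x by simp
  qed
  have nat: "F.G (real n) = real n" if "n \<ge> 1" for n :: nat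
    using that
  proof (induction n rule: dec_induct)
    case base thus ?case using F.G_one by simp
  next
    case (step m)
    have "F.G (1 + real m) = 1 + F.G (real m)" using add1 step by simp
    thus ?case using step by simp
  qed
  have rat: "F.G r = r" if r: "r \<in> \<rat>" "r > 0" for r
  proof -
    obtain a b where ab: "b > 0" "r = of_int a / of_int b" using Rats_cases'[OF r(1)] by metis
    have a: "a > 0" using ab r by (simp add: zero_less_divide_iff)
    have "F.G (real (nat a)) = F.G (real (nat b) * r)" using ab a by simp
    also have "\<dots> = F.G (real (nat b)) * F.G r" using ab r by (intro F.G_mult) auto
    finally have h: "F.G (real (nat a)) = real (nat b) * F.G r" using nat[of "nat b"] ab by simp
    have "F.G (real (nat a)) = real (nat a)" using nat[of "nat a"] a by simp
    hence "real (nat a) = real (nat b) * F.G r" using h by simp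
    hence "of_int a = of_int b * F.G r" using a ab by simp
    hence "F.G r = of_int a / of_int b" using ab(1) by (simp add: field_simps)
    thus ?thesis using ab by simp
  qed
  have Gid: "F.G x = x" if x: "x > 0" for x
  proof (rule ccontr)
    assume ne: "F.G x \<noteq> x"
    show False
    proof (cases "F.G x > x")
      case True
      obtain r where r: "r \<in> \<rat>" "x < r" "r < F.G x" using Rats_dense_in_real[OF True] by blast
      have "F.G x < F.G r" using F.G_mono x r by blast
      thus False using rat r x by simp
    next
      case False
      hence lt: "F.G x < x" using ne by simp
      obtain r where r: "r \<in> \<rat>" "F.G x < r" "r < x" using Rats_dense_in_real[OF lt] by blast
      have "r > 0" using r F.G_pos x by (meson less_trans)
      hence "F.G r < F.G x" using F.G_mono x r by blast
      thus False using rat r \<open>r > 0\<close> by simp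
    qed
  qed
  have ip_pos: "inner (f x) (f v) = inner x v" if "inner x v > 0" for x v
    using F.M1 Gid that by simp
  have ip: "inner (f x) (f v) = inner x v" for x v
  proof (cases "inner x v > 0")
    case True thus ?thesis using ip_pos by blast
  next
    case False
    show ?thesis
    proof (cases "inner x v = 0")
      case True thus ?thesis using F.M3 by simp
    next
      case False2: False
      hence neg: "inner x v < 0" using False by simp
      hence v: "v \<noteq> 0" by auto
      obtain m where m: "m > 0" "f (-v) = - m *\<^sub>R f v" using F.neg_ray[OF v] by blast
      have "inner v v > 0" using v by simp
      hence "inner (f (-v)) (f (-v)) = inner v v" using ip_pos[of "-v" "-v"] by simp
      moreover have "inner (f v) (f v) = inner v v" using ip_pos \<open>inner v v > 0\<close> by blast
      ultimately have "m^2 * inner v v = inner v v" using m by (simp add: power2_eq_square)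
      hence "m^2 = 1" using \<open>inner v v > 0\<close> by simp
      hence m1: "m = 1" using m by (simp add: power2_eq_1_iff)
      have "inner (f x) (f (-v)) = inner x (-v)" using ip_pos neg by simp
      thus ?thesis using m m1 by simp
    qed
  qed
  show ?thesis unfolding orthogonal_transformation_isometry
  proof (intro conjI allI)
    show "f 0 = 0" by (rule F.f0)
    fix x y
    have "inner (f x - f y) (f x - f y) = inner (x - y) (x - y)"
      using ip by (simp add: inner_diff_left inner_diff_right)
    thus "dist (f x) (f y) = dist x y" by (simp add: dist_norm norm_eq_sqrt_inner)
  qed
qed



theorem proposition5p3:
  fixes f :: "real ^ 'n \<Rightarrow> real ^ 'n"
  assumes "CARD('n) \<ge> 2"
    and "inj f"
    and "\<forall>A\<in>K0. f ` (polar A) = polar (f ` A)"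
  shows "orthogonal_transformation f"
  using final assms by blast

end
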